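(* Let $\Phi:\mathbb{R}^n\to(-\infty,\infty]$ be a proper lower semicontinuous convex function. Then there exists a lower semicontinuous convex function $\tilde\varphi:[0,\infty)\times\mathbb{R}^n\to(-\infty,\infty]$ such that $\tilde\varphi(0,y)=\Phi(y)$ for all $y\in\mathbb{R}^n$, $\tilde\varphi(x,y)\in\mathbb{R}$ for all $x>0$, $y\in\mathbb{R}^n$, for each $y$ the map $x\mapsto\tilde\varphi(x,y)$ is strictly decreasing on $(0,\infty)$, and $\lim_{x\to0+}\tilde\varphi(x,y)=\Phi(y)$ for each $y\in\mathbb{R}^n$.
   Context: A convex function $\Phi:\mathbb{R}^n\to(-\infty,\infty]$ is proper if it is not identically $+\infty$. *)

theory Defs
  imports "HOL-Analysis.Analysis"
begin

definition ereal_convex_on :: "'a::real_vector set \<Rightarrow> ('a \<Rightarrow> ereal) \<Rightarrow> bool" where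
  "ereal_convex_on S f \<longleftrightarrow> convex S \<and> (\<forall>x\<in>S. f x \<noteq> -\<infinity>) \<and>
     (\<forall>x\<in>S. \<forall>y\<in>S. \<forall>t::real. 0 < t \<and> t < 1 \<longrightarrow>
        f ((1 - t) *\<^sub>R x + t *\<^sub>R y) \<le> ereal (1 - t) * f x + ereal t * f y)"

definition ereal_lsc_on :: "'a::metric_space set \<Rightarrow> ('a \<Rightarrow> ereal) \<Rightarrow> bool" where
  "ereal_lsc_on S f \<longleftrightarrow> (\<forall>x\<in>S. \<forall>X. (\<forall>k. X k \<in> S) \<and> X \<longlonglongrightarrow> x \<longrightarrow>
      f x \<le> liminf (\<lambda>k. f (X k)))"

definition ereal_proper :: "('a \<Rightarrow> ereal) \<Rightarrow> bool" where
  "ereal_proper f \<longleftrightarrow> (\<forall>x. f x \<noteq> -\<infinity>) \<and> (\<exists>x. f x \<noteq> \<infinity>)"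

end

theory Submission
  imports Defs
begin

lemma real_R:
  fixes x d b :: real
  assumes "x > 0"
  shows "d^2/(2*x) - b*d \<ge> d^2/(4*x) - b^2*x"
proof -
  have "0 \<le> (d - 2*b*x)^2" by simp
  hence "d^2/(4*x) - b^2*x = d^2/(2*x) - b*d - (d - 2*b*x)^2/(4*x)"
    using assms by (simp add: field_simps power2_eq_square) 
  moreover have "(d - 2*b*x)^2/(4*x) \<ge> 0" using assms by simp
  ultimately show ?thesis by linarith
qed

lemma persp_real:
  fixes a b :: "'a::real_inner"
  assumes X: "X > 0" and Y: "Y > 0"
  shows "norm (a + b)^2 / (X + Y) \<le> norm a ^2 / X + norm b ^2 / Y"
proof -
  have "0 \<le> norm (Y *\<^sub>R a - X *\<^sub>R b)^2" by simp
  also have "norm (Y *\<^sub>R a - X *\<^sub>R b)^2 = Y^2 * norm a^2 - 2*X*Y*(inner a b) + X^2 * norm b^2"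
    unfolding power2_norm_eq_inner by (simp add: inner_diff_left inner_diff_right inner_commute power2_eq_square algebra_simps)
  finally have h: "2*X*Y*(inner a b) \<le> Y^2 * norm a^2 + X^2 * norm b^2" by simp
  have e: "norm (a+b)^2 = norm a^2 + 2 * inner a b + norm b^2"
    unfolding power2_norm_eq_inner by (simp add: inner_add_left inner_add_right inner_commute)
  have "X*Y*norm (a+b)^2 \<le> (X+Y)*(Y*norm a^2 + X * norm b^2)"
    using h unfolding e by (simp add: algebra_simps power2_eq_square)
  hence "norm (a+b)^2 \<le> (X+Y)*(Y*norm a^2 + X * norm b^2)/(X*Y)"
    using X Y by (simp add: field_simps)
  also have "(X+Y)*(Y*norm a^2 + X * norm b^2)/(X*Y) = (X+Y)*(norm a ^2 / X + norm b ^2 / Y)"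
    using X Y by (simp add: field_simps)
  finally show ?thesis using X Y by (simp add: field_simps)
qed

lemma lsc_nbhd:
  fixes \<Phi> :: "'a::metric_space \<Rightarrow> ereal"
  assumes lsc: "ereal_lsc_on UNIV \<Phi>" and L: "L < \<Phi> y"
  shows "\<exists>r>0. \<forall>z. dist z y < r \<longrightarrow> L < \<Phi> z"
proof (rule ccontr)
  assume neg: "\<not> ?thesis"
  have ex: "\<exists>z. dist z y < 1 / real (Suc k) \<and> \<Phi> z \<le> L" for k :: nat
  proof -
    have pos: "(1::real) / real (Suc k) > 0" by simp
    have "\<not> (\<forall>z. dist z y < 1 / real (Suc k) \<longrightarrow> L < \<Phi> z)"
      using neg pos by blast
    then obtain z where "dist z y < 1 / real (Suc k)" "\<not> L < \<Phi> z" by blast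
    thus ?thesis using not_less by blast
  qed
  define Z where "Z k = (SOME z. dist z y < 1 / real (Suc k) \<and> \<Phi> z \<le> L)" for k
  have Z: "dist (Z k) y < 1 / real (Suc k) \<and> \<Phi> (Z k) \<le> L" for k
    unfolding Z_def using someI_ex[OF ex[of k]] .
  have "Z \<longlonglongrightarrow> y"
    unfolding lim_sequentially
  proof (intro allI impI)
    fix r :: real assume "r > 0"
    then obtain N where N: "inverse (real (Suc N)) < r" using reals_Archimedean by blast
    show "\<exists>no. \<forall>n\<ge>no. dist (Z n) y < r"
    proof (intro exI allI impI)
      fix n assume "N \<le> n"
      hence "1 / real (Suc n) \<le> 1 / real (Suc N)"
        by (intro divide_left_mono) auto
      hence "dist (Z n) y < 1 / real (Suc N)" using Z[of n] by linarith
      thus "dist (Z n) y < r" using N unfolding inverse_eq_divide by linarith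
    qed
  qed
  moreover have "\<And>X x. X \<longlonglongrightarrow> x \<Longrightarrow> \<Phi> x \<le> liminf (\<lambda>k. \<Phi> (X k))"
    using lsc unfolding ereal_lsc_on_def by simp
  ultimately have "\<Phi> y \<le> liminf (\<lambda>k. \<Phi> (Z k))" by blast
  hence "\<forall>c<\<Phi> y. eventually (\<lambda>k. c < \<Phi> (Z k)) sequentially"
    unfolding le_Liminf_iff .
  hence "eventually (\<lambda>k. L < \<Phi> (Z k)) sequentially" using L by blast
  then obtain N where "\<forall>n\<ge>N. L < \<Phi> (Z n)" unfolding eventually_sequentially by blast
  hence "L < \<Phi> (Z N)" by simp
  thus False using Z[of N] leD by blast
qed

lemma lower_bound:
  fixes \<Phi> :: "'a::real_normed_vector \<Rightarrow> ereal"
  assumes pr: "ereal_proper \<Phi>" and lsc: "ereal_lsc_on UNIV \<Phi>" and cv: "ereal_convex_on UNIV \<Phi>"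
  shows "\<exists>z0 a b. b \<ge> 0 \<and> (\<forall>z. ereal (a - b * dist z z0) \<le> \<Phi> z)"
proof -
  obtain z0 where z0: "\<Phi> z0 \<noteq> \<infinity>" using pr unfolding ereal_proper_def by blast
  have "\<Phi> z0 \<noteq> -\<infinity>" using pr unfolding ereal_proper_def by blast
  then obtain c where c: "\<Phi> z0 = ereal c" using z0 by (cases "\<Phi> z0") auto
  have "ereal (c - 1) < \<Phi> z0" using c by simp
  then obtain r where r: "r > 0" and nb: "\<And>z. dist z z0 < r \<Longrightarrow> ereal (c - 1) < \<Phi> z"
    using lsc_nbhd[OF lsc] by blast
  have "ereal (c - 1 - (2/r) * dist z z0) \<le> \<Phi> z" for z
  proof (cases "dist z z0 < r")
    case True
    have "ereal (c - 1 - (2/r) * dist z z0) \<le> ereal (c - 1)" using r by simp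
    also have "\<dots> \<le> \<Phi> z" using nb[OF True] by simp
    finally show ?thesis .
  next
    case False
    define d where "d = dist z z0"
    have d: "d \<ge> r" using False d_def by simp
    define t where "t = r / (2*d)"
    have t0: "t > 0" and t1: "t < 1" using r d unfolding t_def by (auto simp: field_simps)
    define w where "w = (1 - t) *\<^sub>R z0 + t *\<^sub>R z"
    have "w - z0 = t *\<^sub>R (z - z0)" unfolding w_def by (simp add: algebra_simps)
    hence "dist w z0 = t * d" using t0 unfolding d_def by (simp add: dist_norm)
    also have "\<dots> = r / 2" using r d unfolding t_def by (simp add: field_simps)
    finally have "dist w z0 < r" using r by simp
    hence lt: "ereal (c - 1) < \<Phi> w" by (rule nb)
    have le: "\<Phi> w \<le> ereal (1 - t) * \<Phi> z0 + ereal t * \<Phi> z"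
      using cv t0 t1 unfolding ereal_convex_on_def w_def by simp
    show ?thesis
    proof (cases "\<Phi> z")
      case (real v)
      have "ereal (c - 1) < ereal ((1 - t) * c + t * v)" using less_le_trans[OF lt le] c real by simp
      hence "c - 1 < (1 - t) * c + t * v" by simp
      hence "t * (v - c) > -1" by (simp add: algebra_simps)
      hence "v - c > -1 / t" using t0 by (simp add: field_simps)
      moreover have "1 / t = (2/r) * d" using r d unfolding t_def by (simp add: field_simps)
      ultimately show ?thesis using real d_def by simp
    next
      case PInf thus ?thesis by simp
    next
      case MInf thus ?thesis using pr unfolding ereal_proper_def by blast
    qed
  qed
  moreover have "2/r \<ge> 0" using r by simp
  ultimately show ?thesis by blast
qed


definition qf :: "real \<Rightarrow> 'a::real_normed_vector \<Rightarrow> ereal" where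
  "qf x w = (if x = 0 then (if w = 0 then 0 else \<infinity>) else ereal (norm w ^ 2 / (2*x)))"

definition Ienv :: "('a::real_normed_vector \<Rightarrow> ereal) \<Rightarrow> real \<Rightarrow> 'a \<Rightarrow> ereal" where
  "Ienv \<Phi> x y = (INF z. \<Phi> z + qf x (y - z))"

definition phi :: "('a::real_normed_vector \<Rightarrow> ereal) \<Rightarrow> real \<times> 'a \<Rightarrow> ereal" where
  "phi \<Phi> p = Ienv \<Phi> (fst p) (snd p) - ereal (fst p)"

lemma qf_zero [simp]: "qf x 0 = 0"
  unfolding qf_def by simp

lemma qf_nonneg: "x \<ge> 0 \<Longrightarrow> qf x w \<ge> 0"
  unfolding qf_def by auto

lemma qf_pos: "x > 0 \<Longrightarrow> qf x w = ereal (norm w ^ 2 / (2*x))"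
  unfolding qf_def by simp

lemma Ienv_le: "Ienv \<Phi> x y \<le> \<Phi> z + qf x (y - z)"
  unfolding Ienv_def by (rule INF_lower) simp

lemma Ienv_0:
  fixes \<Phi> :: "'a::real_normed_vector \<Rightarrow> ereal"
  assumes "\<And>z. \<Phi> z \<noteq> -\<infinity>"
  shows "Ienv \<Phi> 0 y = \<Phi> y"
proof (rule antisym)
  show "Ienv \<Phi> 0 y \<le> \<Phi> y" using Ienv_le[of \<Phi> 0 y y] by simp
  show "\<Phi> y \<le> Ienv \<Phi> 0 y" unfolding Ienv_def
  proof (rule INF_greatest)
    fix z :: 'a assume "z \<in> UNIV"
    show "\<Phi> y \<le> \<Phi> z + qf 0 (y - z)"
    proof (cases "z = y")
      case True thus ?thesis by simp
    next
      case False
      hence "qf 0 (y - z) = \<infinity>" unfolding qf_def by simp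
      thus ?thesis using assms[of z] by simp
    qed
  qed
qed

lemma phi_0:
  fixes \<Phi> :: "'a::real_normed_vector \<Rightarrow> ereal"
  assumes "\<And>z. \<Phi> z \<noteq> -\<infinity>"
  shows "phi \<Phi> (0, y) = \<Phi> y"
  unfolding phi_def using Ienv_0[OF assms] by (simp add: zero_ereal_def[symmetric])

lemma term_lb:
  fixes \<Phi> :: "'a::real_normed_vector \<Rightarrow> ereal"
  assumes b: "b \<ge> 0" and lb: "\<And>z. ereal (a - b * dist z z0) \<le> \<Phi> z" and x: "x > 0"
  shows "ereal (a - b * dist y z0 - b^2 * x + (dist z y)^2 / (4*x)) \<le> \<Phi> z + qf x (y - z)"
proof -
  define d where "d = dist z y"
  have q: "qf x (y - z) = ereal (d^2/(2*x))"
    using x unfolding qf_pos[OF x] d_def by (simp add: dist_norm norm_minus_commute)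
  have "dist z z0 \<le> d + dist y z0" unfolding d_def by (rule dist_triangle)
  hence "b * dist z z0 \<le> b * (d + dist y z0)" using b by (rule mult_left_mono)
  moreover have "d^2/(2*x) - b*d \<ge> d^2/(4*x) - b^2*x" using real_R[OF x] .
  ultimately have r: "a - b * dist y z0 - b^2 * x + d^2 / (4*x) \<le> a - b * dist z z0 + d^2/(2*x)"
    by (simp add: algebra_simps)
  have "ereal (a - b * dist z z0 + d^2/(2*x)) = ereal (a - b * dist z z0) + qf x (y - z)"
    using q by simp
  also have "\<dots> \<le> \<Phi> z + qf x (y - z)" using lb[of z] by (rule add_right_mono)
  finally show ?thesis using r unfolding d_def by (meson ereal_less_eq(3) order_trans)
qed

lemma Ienv_lb:
  fixes \<Phi> :: "'a::real_normed_vector \<Rightarrow> ereal"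
  assumes b: "b \<ge> 0" and lb: "\<And>z. ereal (a - b * dist z z0) \<le> \<Phi> z" and x: "x > 0"
  shows "ereal (a - b * dist y z0 - b^2 * x) \<le> Ienv \<Phi> x y"
  unfolding Ienv_def
proof (rule INF_greatest)
  fix z :: 'a assume "z \<in> UNIV"
  have "ereal (a - b * dist y z0 - b^2 * x) \<le> ereal (a - b * dist y z0 - b^2 * x + (dist z y)^2 / (4*x))"
    using x by simp
  also have "\<dots> \<le> \<Phi> z + qf x (y - z)" by (rule term_lb[OF b lb x])
  finally show "ereal (a - b * dist y z0 - b^2 * x) \<le> \<Phi> z + qf x (y - z)" .
qed

lemma Ienv_finite:
  fixes \<Phi> :: "'a::real_normed_vector \<Rightarrow> ereal"
  assumes b: "b \<ge> 0" and lb: "\<And>z. ereal (a - b * dist z z0) \<le> \<Phi> z" and x: "x > 0"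
    and z1: "\<Phi> z1 \<noteq> \<infinity>"
  shows "\<exists>c. Ienv \<Phi> x y = ereal c"
proof -
  have "Ienv \<Phi> x y \<le> \<Phi> z1 + qf x (y - z1)" by (rule Ienv_le)
  also have "\<dots> < \<infinity>" using z1 qf_pos[OF x, of "y - z1"] by (cases "\<Phi> z1") auto
  finally have "Ienv \<Phi> x y \<noteq> \<infinity>" by simp
  moreover have "Ienv \<Phi> x y \<noteq> -\<infinity>" using Ienv_lb[OF b lb x, of y] by auto
  ultimately show ?thesis by (cases "Ienv \<Phi> x y") auto
qed

lemma Ienv_mono:
  fixes \<Phi> :: "'a::real_normed_vector \<Rightarrow> ereal"
  assumes "0 < x1" "x1 \<le> x2"
  shows "Ienv \<Phi> x2 y \<le> Ienv \<Phi> x1 y"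
  unfolding Ienv_def
proof (rule INF_mono')
  fix z
  have "norm (y - z)^2 / (2*x2) \<le> norm (y - z)^2 / (2*x1)"
    using assms by (intro divide_left_mono) auto
  thus "\<Phi> z + qf x2 (y - z) \<le> \<Phi> z + qf x1 (y - z)"
    using assms by (simp add: qf_pos add_left_mono)
qed


lemma phi_strict:
  fixes \<Phi> :: "'a::real_normed_vector \<Rightarrow> ereal"
  assumes b: "b \<ge> 0" and lb: "\<And>z. ereal (a - b * dist z z0) \<le> \<Phi> z"
    and z1: "\<Phi> z1 \<noteq> \<infinity>" and x: "0 < x1" "x1 < x2"
  shows "phi \<Phi> (x2, y) < phi \<Phi> (x1, y)"
proof -
  obtain c1 where c1: "Ienv \<Phi> x1 y = ereal c1" using Ienv_finite[OF b lb _ z1] x by blast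
  obtain c2 where c2: "Ienv \<Phi> x2 y = ereal c2" using Ienv_finite[OF b lb _ z1] x by fastforce
  have "Ienv \<Phi> x2 y \<le> Ienv \<Phi> x1 y" using x by (intro Ienv_mono) auto
  hence "c2 \<le> c1" using c1 c2 by simp
  thus ?thesis unfolding phi_def using c1 c2 x by simp
qed

lemma K:
  fixes \<Phi> :: "'a::real_normed_vector \<Rightarrow> ereal"
  assumes lsc: "ereal_lsc_on UNIV \<Phi>" and ninf: "\<And>z. \<Phi> z \<noteq> -\<infinity>"
    and b: "b \<ge> 0" and lb: "\<And>z. ereal (a - b * dist z z0) \<le> \<Phi> z"
    and z1: "\<Phi> z1 \<noteq> \<infinity>" and L: "L < \<Phi> y"
  shows "\<exists>\<delta>>0. \<forall>x y'. 0 \<le> x \<and> x < \<delta> \<and> dist y' y < \<delta> \<longrightarrow> L < phi \<Phi> (x, y')"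
proof -
  obtain u where u1: "L < u" and u2: "u < \<Phi> y" using L dense by blast
  obtain v where v1: "u < v" and v2: "v < \<Phi> y" using u2 dense by blast
  have "u \<noteq> -\<infinity>" "u \<noteq> \<infinity>" using u1 u2 by auto
  then obtain u' where u': "u = ereal u'" by (cases u) auto
  have "v \<noteq> -\<infinity>" "v \<noteq> \<infinity>" using v1 v2 u1 by auto
  then obtain v' where v': "v = ereal v'" by (cases v) auto
  have uv: "u' < v'" using v1 u' v' by simp
  obtain r where r: "r > 0" and nb: "\<And>z. dist z y < r \<Longrightarrow> v < \<Phi> z"
    using lsc_nbhd[OF lsc v2] by blast
  define M where "M = v' - a + b * (dist y z0 + r/2) + b^2"
  define \<delta> where "\<delta> = min (r/2) (min 1 (min (v' - u') (r^2/(16*(\<bar>M\<bar>+1)))))"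
  have \<delta>pos: "\<delta> > 0" unfolding \<delta>_def using r uv by (simp add: abs_add_one_gt_zero)
  have "L < phi \<Phi> (x, y')" if x0: "0 \<le> x" and x\<delta>: "x < \<delta>" and y': "dist y' y < \<delta>" for x y'
  proof (cases "x = 0")
    case True
    have "dist y' y < r" using y' r unfolding \<delta>_def by simp
    hence "v < \<Phi> y'" by (rule nb)
    moreover have "phi \<Phi> (x, y') = \<Phi> y'" using True phi_0[of \<Phi> y'] ninf by simp
    ultimately show ?thesis using u1 v1 by (metis less_trans)
  next
    case False
    hence xp: "x > 0" using x0 by simp
    have x1: "x < 1" and xvu: "x < v' - u'" and xr: "x < r^2/(16*(\<bar>M\<bar>+1))" and y'r: "dist y' y < r/2"
      using x\<delta> y' unfolding \<delta>_def by auto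
    have Mbig: "\<bar>M\<bar> + 1 < r^2/(16*x)"
    proof -
      have "x * (16*(\<bar>M\<bar>+1)) < r^2" using xr by (simp add: pos_less_divide_eq abs_add_one_gt_zero)
      thus ?thesis using xp by (simp add: pos_less_divide_eq algebra_simps)
    qed
    have "ereal v' \<le> Ienv \<Phi> x y'" unfolding Ienv_def
    proof (rule INF_greatest)
      fix z :: 'a assume "z \<in> UNIV"
      show "ereal v' \<le> \<Phi> z + qf x (y' - z)"
      proof (cases "dist z y < r")
        case True
        have "ereal v' \<le> \<Phi> z" using nb[OF True] v' by simp
        also have "\<dots> \<le> \<Phi> z + qf x (y' - z)" by (rule add_increasing2[OF qf_nonneg[OF x0]]) simp
        finally show ?thesis .
      next
        case False
        define d where "d = dist z y'"
        have "dist z y \<le> dist z y' + dist y' y" by (rule dist_triangle)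
        hence dge: "d \<ge> r/2" using False y'r unfolding d_def by simp
        hence "d^2 \<ge> (r/2)^2" using r by (intro power_mono) auto
        hence "d^2/(4*x) \<ge> (r/2)^2/(4*x)" using xp by (intro divide_right_mono) auto
        moreover have "(r/2)^2/(4*x) = r^2/(16*x)" by (simp add: power2_eq_square field_simps)
        ultimately have dd: "d^2/(4*x) > \<bar>M\<bar> + 1" using Mbig by simp
        have "dist y' z0 \<le> dist y' y + dist y z0" by (rule dist_triangle)
        hence "b * dist y' z0 \<le> b * (r/2 + dist y z0)" using b y'r by (intro mult_left_mono) auto
        moreover have "b^2 * x \<le> b^2" using x1 xp by (simp add: mult_left_le)
        ultimately have "v' \<le> a - b * dist y' z0 - b^2 * x + d^2/(4*x)"
          using dd unfolding M_def by (simp add: algebra_simps)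
        hence "ereal v' \<le> ereal (a - b * dist y' z0 - b^2 * x + (dist z y')^2/(4*x))"
          unfolding d_def by simp
        also have "\<dots> \<le> \<Phi> z + qf x (y' - z)" by (rule term_lb[OF b lb xp])
        finally show ?thesis .
      qed
    qed
    moreover obtain c where c: "Ienv \<Phi> x y' = ereal c" using Ienv_finite[OF b lb xp z1] by blast
    ultimately have "v' \<le> c" by simp
    hence "ereal u' < ereal (c - x)" using xvu by simp
    hence "L < ereal (c - x)" using u' u1 by (metis less_trans)
    thus ?thesis unfolding phi_def using c by simp
  qed
  thus ?thesis using \<delta>pos by blast
qed


lemma ereal_G:
  fixes A B C :: ereal
  assumes A: "A \<noteq> -\<infinity>" and B: "B \<noteq> -\<infinity>" and s: "s > 0" and t: "t > 0"
    and H: "\<And>\<alpha> \<beta>. A < ereal \<alpha> \<Longrightarrow> B < ereal \<beta> \<Longrightarrow> C \<le> ereal (s*\<alpha> + t*\<beta>)"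
  shows "C \<le> ereal s * A + ereal t * B"
proof (cases "A = \<infinity> \<or> B = \<infinity>")
  case True
  hence e: "ereal s * A + ereal t * B = \<infinity>" using A B s t
    by (cases A; cases B) auto
  show ?thesis by (subst e) simp
next
  case False
  then obtain a b where a: "A = ereal a" and b: "B = ereal b" using A B
    by (cases A; cases B) auto
  have "C \<le> ereal (s*a + t*b) + ereal e" if e: "e > 0" for e
  proof -
    define h where "h = e / (s + t)"
    have h: "h > 0" using e s t unfolding h_def by simp
    have "C \<le> ereal (s*(a+h) + t*(b+h))" using H[of "a+h" "b+h"] a b h by simp
    also have "s*(a+h) + t*(b+h) = s*a + t*b + (s+t)*h" by (simp add: algebra_simps)
    also have "(s+t)*h = e" using s t unfolding h_def by simp
    finally show ?thesis by simp
  qed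
  hence "C \<le> ereal (s*a + t*b)" by (rule ereal_le_epsilon2)
  thus ?thesis using a b by simp
qed

lemma half_aux: "(A::real) \<le> 2 * a + 2 * b \<Longrightarrow> A / 2 \<le> a + b"
  by linarith

lemma qf_persp:
  fixes w1 w2 :: "'a::real_inner"
  assumes x1: "x1 \<ge> 0" and x2: "x2 \<ge> 0" and t: "0 < t" "t < 1"
    and q1: "qf x1 w1 = ereal e1" and q2: "qf x2 w2 = ereal e2"
  shows "qf ((1-t)*x1 + t*x2) ((1-t) *\<^sub>R w1 + t *\<^sub>R w2) \<le> ereal ((1-t)*e1 + t*e2)"
proof -
  have w1: "x1 = 0 \<Longrightarrow> w1 = 0 \<and> e1 = 0" using q1 unfolding qf_def by (auto split: if_splits)
  have w2: "x2 = 0 \<Longrightarrow> w2 = 0 \<and> e2 = 0" using q2 unfolding qf_def by (auto split: if_splits)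
  have nt1: "norm ((1-t) *\<^sub>R w1) = (1-t) * norm w1" using t by (subst norm_scaleR) simp
  have e1: "x1 > 0 \<Longrightarrow> e1 = norm w1^2/(2*x1)" using q1 unfolding qf_def by auto
  have e2: "x2 > 0 \<Longrightarrow> e2 = norm w2^2/(2*x2)" using q2 unfolding qf_def by auto
  show ?thesis
  proof (cases "x1 = 0")
    case True note X1 = this
    show ?thesis
    proof (cases "x2 = 0")
      case True thus ?thesis using X1 w1 w2 by simp
    next
      case False
      hence p2: "x2 > 0" using x2 by simp
      have "t * x2 > 0" using t p2 by simp
      have "qf ((1-t)*x1 + t*x2) ((1-t) *\<^sub>R w1 + t *\<^sub>R w2) = qf (t*x2) (t *\<^sub>R w2)"
        using X1 w1 by simp
      also have "\<dots> = ereal (norm (t *\<^sub>R w2)^2 / (2*(t*x2)))" by (rule qf_pos) fact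
      also have "norm (t *\<^sub>R w2)^2 / (2*(t*x2)) = t * e2"
        using e2[OF p2] t by (simp add: power_mult_distrib power2_eq_square field_simps)
      finally show ?thesis using X1 w1 by simp
    qed
  next
    case False
    hence p1: "x1 > 0" using x1 by simp
    show ?thesis
    proof (cases "x2 = 0")
      case True
      have "(1-t) * x1 > 0" using t p1 by simp
      have "qf ((1-t)*x1 + t*x2) ((1-t) *\<^sub>R w1 + t *\<^sub>R w2) = qf ((1-t)*x1) ((1-t) *\<^sub>R w1)"
        using True w2 by simp
      also have "\<dots> = ereal (norm ((1-t) *\<^sub>R w1)^2 / (2*((1-t)*x1)))" by (rule qf_pos) fact
      also have "norm ((1-t) *\<^sub>R w1)^2 / (2*((1-t)*x1)) = (1-t) * e1"
        unfolding nt1 e1[OF p1] using t p1 by (simp add: power2_eq_square field_simps)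
      finally show ?thesis using True w2 by simp
    next
      case False
      hence p2: "x2 > 0" using x2 by simp
      have X: "(1-t)*x1 > 0" and Y: "t*x2 > 0" using t p1 p2 by auto
      have Q: "qf ((1-t)*x1 + t*x2) ((1-t) *\<^sub>R w1 + t *\<^sub>R w2)
          = ereal (norm ((1-t) *\<^sub>R w1 + t *\<^sub>R w2)^2 / ((1-t)*x1 + t*x2) / 2)"
        using X Y qf_pos[of "(1-t)*x1 + t*x2"] by (simp add: field_simps)
      have "norm ((1-t) *\<^sub>R w1 + t *\<^sub>R w2)^2 / ((1-t)*x1 + t*x2)
          \<le> norm ((1-t) *\<^sub>R w1)^2 / ((1-t)*x1) + norm (t *\<^sub>R w2)^2 / (t*x2)"
        by (rule persp_real[OF X Y])
      also have "norm ((1-t) *\<^sub>R w1)^2 / ((1-t)*x1) = 2 * ((1-t) * e1)"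
        unfolding nt1 e1[OF p1] using t p1 by (simp add: power2_eq_square field_simps)
      also have "norm (t *\<^sub>R w2)^2 / (t*x2) = 2 * (t * e2)"
        using e2[OF p2] t by (simp add: power_mult_distrib power2_eq_square field_simps)
      finally have R0: "norm ((1-t) *\<^sub>R w1 + t *\<^sub>R w2)^2 / ((1-t)*x1 + t*x2) \<le> 2 * ((1-t) * e1) + 2 * (t * e2)" .
      have R: "norm ((1-t) *\<^sub>R w1 + t *\<^sub>R w2)^2 / ((1-t)*x1 + t*x2) / 2 \<le> (1-t)*e1 + t*e2"
        by (rule half_aux[OF R0])
      show ?thesis unfolding Q using R by simp
    qed
  qed
qed

lemma ereal_sum_split:
  fixes A B :: ereal
  assumes "A \<noteq> -\<infinity>" "B \<noteq> -\<infinity>" "A + B < ereal c"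
  shows "\<exists>a b. A = ereal a \<and> B = ereal b \<and> a + b < c"
  using assms by (cases A; cases B) auto

lemma phi_lt_Ienv:
  assumes "phi \<Phi> (x, y) < ereal \<alpha>"
  shows "Ienv \<Phi> x y < ereal (\<alpha> + x)"
  using assms unfolding phi_def by (cases "Ienv \<Phi> x y") auto

lemma phi_convex:
  fixes \<Phi> :: "'a::real_inner \<Rightarrow> ereal"
  assumes cv: "ereal_convex_on UNIV \<Phi>" and ninf: "\<And>z. \<Phi> z \<noteq> -\<infinity>"
    and b: "b \<ge> 0" and lb: "\<And>z. ereal (a - b * dist z z0) \<le> \<Phi> z"
    and z1: "\<Phi> z1 \<noteq> \<infinity>"
  shows "ereal_convex_on ({0::real..} \<times> UNIV) (phi \<Phi>)"
proof -
  have nm: "phi \<Phi> p \<noteq> -\<infinity>" if "p \<in> {0::real..} \<times> UNIV" for p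
  proof -
    obtain x y where p: "p = (x, y)" by (cases p)
    show ?thesis
    proof (cases "x = 0")
      case True thus ?thesis using p phi_0[of \<Phi> y] ninf by simp
    next
      case False
      hence "x > 0" using that p by simp
      then obtain c where "Ienv \<Phi> x y = ereal c" using Ienv_finite[OF b lb _ z1] by blast
      thus ?thesis using p unfolding phi_def by simp
    qed
  qed
  have main: "phi \<Phi> ((1 - t) *\<^sub>R p1 + t *\<^sub>R p2) \<le> ereal (1 - t) * phi \<Phi> p1 + ereal t * phi \<Phi> p2"
    if p1: "p1 \<in> {0::real..} \<times> UNIV" and p2: "p2 \<in> {0::real..} \<times> UNIV" and t: "0 < t" "t < 1" for p1 p2 t
  proof (rule ereal_G[OF nm[OF p1] nm[OF p2]])
    show "1 - t > 0" "t > 0" using t by auto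
    fix \<alpha> \<beta> assume a1: "phi \<Phi> p1 < ereal \<alpha>" and a2: "phi \<Phi> p2 < ereal \<beta>"
    obtain x1 y1 where P1: "p1 = (x1, y1)" by (cases p1)
    obtain x2 y2 where P2: "p2 = (x2, y2)" by (cases p2)
    have x1: "x1 \<ge> 0" and x2: "x2 \<ge> 0" using p1 p2 P1 P2 by auto
    have "Ienv \<Phi> x1 y1 < ereal (\<alpha> + x1)" using a1 P1 by (simp add: phi_lt_Ienv)
    then obtain u1 where u1: "\<Phi> u1 + qf x1 (y1 - u1) < ereal (\<alpha> + x1)"
      unfolding Ienv_def INF_less_iff by blast
    then obtain r1 e1 where r1: "\<Phi> u1 = ereal r1" and e1: "qf x1 (y1 - u1) = ereal e1"
      and rs1: "r1 + e1 < \<alpha> + x1"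
      using ereal_sum_split[of "\<Phi> u1" "qf x1 (y1 - u1)" "\<alpha> + x1"] ninf[of u1] qf_nonneg[OF x1, of "y1 - u1"] by auto
    have "Ienv \<Phi> x2 y2 < ereal (\<beta> + x2)" using a2 P2 by (simp add: phi_lt_Ienv)
    then obtain u2 where u2: "\<Phi> u2 + qf x2 (y2 - u2) < ereal (\<beta> + x2)"
      unfolding Ienv_def INF_less_iff by blast
    then obtain r2 e2 where r2: "\<Phi> u2 = ereal r2" and e2: "qf x2 (y2 - u2) = ereal e2"
      and rs2: "r2 + e2 < \<beta> + x2"
      using ereal_sum_split[of "\<Phi> u2" "qf x2 (y2 - u2)" "\<beta> + x2"] ninf[of u2] qf_nonneg[OF x2, of "y2 - u2"] by auto
    define u where "u = (1 - t) *\<^sub>R u1 + t *\<^sub>R u2"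
    define x where "x = (1 - t) * x1 + t * x2"
    define y where "y = (1 - t) *\<^sub>R y1 + t *\<^sub>R y2"
    have pt: "(1 - t) *\<^sub>R p1 + t *\<^sub>R p2 = (x, y)" unfolding P1 P2 x_def y_def by simp
    have yu: "y - u = (1 - t) *\<^sub>R (y1 - u1) + t *\<^sub>R (y2 - u2)"
      unfolding y_def u_def by (simp add: algebra_simps)
    have "\<Phi> u \<le> ereal (1 - t) * \<Phi> u1 + ereal t * \<Phi> u2"
      using cv t unfolding ereal_convex_on_def u_def by simp
    hence Pu: "\<Phi> u \<le> ereal ((1 - t) * r1 + t * r2)" using r1 r2 by simp
    have Qu: "qf x (y - u) \<le> ereal ((1 - t) * e1 + t * e2)"
      unfolding yu x_def by (rule qf_persp[OF x1 x2 t e1 e2])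
    have "Ienv \<Phi> x y \<le> \<Phi> u + qf x (y - u)" by (rule Ienv_le)
    also have "\<dots> \<le> ereal ((1 - t) * r1 + t * r2) + ereal ((1 - t) * e1 + t * e2)"
      by (rule add_mono[OF Pu Qu])
    also have "\<dots> = ereal ((1 - t) * (r1 + e1) + t * (r2 + e2))" by (simp add: algebra_simps)
    finally have I: "Ienv \<Phi> x y \<le> ereal ((1 - t) * (r1 + e1) + t * (r2 + e2))" .
    have "(1 - t) * (r1 + e1) + t * (r2 + e2) \<le> (1 - t) * (\<alpha> + x1) + t * (\<beta> + x2)"
    proof (rule add_mono)
      show "(1 - t) * (r1 + e1) \<le> (1 - t) * (\<alpha> + x1)" using rs1 t by (intro mult_left_mono) auto
      show "t * (r2 + e2) \<le> t * (\<beta> + x2)" using rs2 t by (intro mult_left_mono) auto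
    qed
    hence "(1 - t) * (r1 + e1) + t * (r2 + e2) - x \<le> (1 - t) * \<alpha> + t * \<beta>"
      unfolding x_def by (simp add: algebra_simps)
    moreover have "Ienv \<Phi> x y - ereal x \<le> ereal ((1 - t) * (r1 + e1) + t * (r2 + e2) - x)"
      using I by (cases "Ienv \<Phi> x y") auto
    ultimately show "phi \<Phi> ((1 - t) *\<^sub>R p1 + t *\<^sub>R p2) \<le> ereal ((1 - t) * \<alpha> + t * \<beta>)"
      unfolding pt phi_def by (simp add: order_trans)
  qed
  show ?thesis unfolding ereal_convex_on_def
    using nm main by (auto intro!: convex_Times)
qed


lemma phi_finite:
  fixes \<Phi> :: "'a::real_normed_vector \<Rightarrow> ereal"
  assumes b: "b \<ge> 0" and lb: "\<And>z. ereal (a - b * dist z z0) \<le> \<Phi> z"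
    and z1: "\<Phi> z1 \<noteq> \<infinity>" and x: "x > 0"
  shows "phi \<Phi> (x, y) = ereal (real_of_ereal (phi \<Phi> (x, y)))"
proof -
  obtain c where "Ienv \<Phi> x y = ereal c" using Ienv_finite[OF b lb x z1] by blast
  thus ?thesis unfolding phi_def by simp
qed

lemma phi_le:
  fixes \<Phi> :: "'a::real_normed_vector \<Rightarrow> ereal"
  assumes b: "b \<ge> 0" and lb: "\<And>z. ereal (a - b * dist z z0) \<le> \<Phi> z"
    and z1: "\<Phi> z1 \<noteq> \<infinity>" and x: "x > 0"
  shows "phi \<Phi> (x, y) \<le> \<Phi> y"
proof -
  obtain c where c: "Ienv \<Phi> x y = ereal c" using Ienv_finite[OF b lb x z1] by blast
  have "Ienv \<Phi> x y \<le> \<Phi> y" using Ienv_le[of \<Phi> x y y] by simp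
  moreover have "phi \<Phi> (x, y) \<le> Ienv \<Phi> x y" unfolding phi_def using c x by simp
  ultimately show ?thesis by simp
qed

theorem proposition1:
  fixes \<Phi> :: "real ^ 'n \<Rightarrow> ereal"
  assumes "ereal_proper \<Phi>"
    and "ereal_lsc_on UNIV \<Phi>"
    and "ereal_convex_on UNIV \<Phi>"
  shows "\<exists>\<phi> :: (real \<times> (real ^ 'n)) \<Rightarrow> ereal.
           ereal_lsc_on ({0::real..} \<times> (UNIV :: (real ^ 'n) set)) \<phi> \<and>
           ereal_convex_on ({0::real..} \<times> (UNIV :: (real ^ 'n) set)) \<phi> \<and>
           (\<forall>y. \<phi> (0, y) = \<Phi> y) \<and>
           (\<forall>x y. x > 0 \<longrightarrow> \<phi> (x, y) \<noteq> \<infinity> \<and> \<phi> (x, y) \<noteq> -\<infinity>) \<and>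
           (\<forall>y x1 x2. 0 < x1 \<and> x1 < x2 \<longrightarrow> \<phi> (x2, y) < \<phi> (x1, y)) \<and>
           (\<forall>y. ((\<lambda>x. \<phi> (x, y)) \<longlongrightarrow> \<Phi> y) (at_right 0))"
proof -
  note pr = assms(1) and lsc = assms(2) and cv = assms(3)
  have ninf: "\<And>z. \<Phi> z \<noteq> -\<infinity>" using pr unfolding ereal_proper_def by blast
  obtain z1 where z1: "\<Phi> z1 \<noteq> \<infinity>" using pr unfolding ereal_proper_def by blast
  obtain z0 a b where b: "b \<ge> 0" and lb: "\<And>z. ereal (a - b * dist z z0) \<le> \<Phi> z"
    using lower_bound[OF pr lsc cv] by blast
  define T where "T = {0::real..} \<times> (UNIV :: (real ^ 'n) set)"
  have conv: "ereal_convex_on T (phi \<Phi>)"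
    unfolding T_def by (rule phi_convex[OF cv ninf b lb z1])
  have fin: "phi \<Phi> (x, y) = ereal (real_of_ereal (phi \<Phi> (x, y)))" if "x > 0" for x y
    by (rule phi_finite[OF b lb z1 that])
  define S where "S = {0::real<..} \<times> (UNIV :: (real ^ 'n) set)"
  define f where "f p = real_of_ereal (phi \<Phi> p)" for p
  have finS: "phi \<Phi> p = ereal (f p)" if "p \<in> S" for p
    using fin[of "fst p" "snd p"] that unfolding S_def f_def by auto
  have openS: "open S" unfolding S_def by (intro open_Times) auto
  have convS: "convex S" unfolding S_def by (intro convex_Times) auto
  have "S \<subseteq> T" unfolding S_def T_def by auto
  have cvf: "convex_on S f"
  proof (rule convex_onI[OF _ convS])
    fix t :: real and p1 p2 assume t: "t > 0" "t < 1" and p: "p1 \<in> S" "p2 \<in> S"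
    have pt: "(1 - t) *\<^sub>R p1 + t *\<^sub>R p2 \<in> S" using convS p t
      by (simp add: convex_def)
    have "phi \<Phi> ((1 - t) *\<^sub>R p1 + t *\<^sub>R p2) \<le> ereal (1 - t) * phi \<Phi> p1 + ereal t * phi \<Phi> p2"
      using conv p t \<open>S \<subseteq> T\<close> unfolding ereal_convex_on_def by blast
    hence "ereal (f ((1 - t) *\<^sub>R p1 + t *\<^sub>R p2)) \<le> ereal ((1 - t) * f p1 + t * f p2)"
      using finS[OF pt] finS[OF p(1)] finS[OF p(2)] by simp
    thus "f ((1 - t) *\<^sub>R p1 + t *\<^sub>R p2) \<le> (1 - t) * f p1 + t * f p2" by simp
  qed
  have contf: "continuous_on S f" by (rule convex_on_continuous[OF openS cvf])
  have lscphi: "ereal_lsc_on T (phi \<Phi>)"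
    unfolding ereal_lsc_on_def
  proof (intro ballI allI impI)
    fix p X assume pT: "p \<in> T" and HX: "(\<forall>k. X k \<in> T) \<and> X \<longlonglongrightarrow> p"
    hence XT: "\<And>k. X k \<in> T" and Xp: "X \<longlonglongrightarrow> p" by auto
    obtain x y where pxy: "p = (x, y)" by (cases p)
    show "phi \<Phi> p \<le> liminf (\<lambda>k. phi \<Phi> (X k))"
    proof (cases "x = 0")
      case True
      have p0: "phi \<Phi> p = \<Phi> y" using True pxy phi_0[of \<Phi> y] ninf by simp
      show ?thesis unfolding p0 le_Liminf_iff
      proof (intro allI impI)
        fix c assume c: "c < \<Phi> y"
        obtain \<delta> where \<delta>: "\<delta> > 0" and H: "\<And>x y'. 0 \<le> x \<and> x < \<delta> \<and> dist y' y < \<delta> \<Longrightarrow> c < phi \<Phi> (x, y')"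
          using K[OF lsc ninf b lb z1 c] by blast
        have "eventually (\<lambda>k. dist (X k) p < \<delta>) sequentially"
          using Xp \<delta> tendsto_iff by blast
        thus "eventually (\<lambda>k. c < phi \<Phi> (X k)) sequentially"
        proof (rule eventually_mono)
          fix k assume d: "dist (X k) p < \<delta>"
          have "dist (fst (X k)) (fst p) < \<delta>" using dist_fst_le[of "X k" p] d by linarith
          moreover have "dist (snd (X k)) (snd p) < \<delta>" using dist_snd_le[of "X k" p] d by linarith
          moreover have "fst (X k) \<ge> 0" using XT[of k] unfolding T_def by auto
          ultimately have "c < phi \<Phi> (fst (X k), snd (X k))"
            using True pxy by (intro H) (auto simp: dist_real_def)
          thus "c < phi \<Phi> (X k)" by simp
        qed
      qed
    next
      case False
      hence pS: "p \<in> S" using pT pxy unfolding S_def T_def by auto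
      have "isCont f p" using contf openS pS continuous_on_eq_continuous_at by blast
      hence "(\<lambda>k. f (X k)) \<longlonglongrightarrow> f p" using Xp by (rule isCont_tendsto_compose)
      hence l1: "(\<lambda>k. ereal (f (X k))) \<longlonglongrightarrow> ereal (f p)" by simp
      have "eventually (\<lambda>k. X k \<in> S) sequentially"
        using Xp openS pS by (rule topological_tendstoD)
      hence "eventually (\<lambda>k. ereal (f (X k)) = phi \<Phi> (X k)) sequentially"
        by (rule eventually_mono) (simp add: finS)
      hence "(\<lambda>k. phi \<Phi> (X k)) \<longlonglongrightarrow> phi \<Phi> p"
        using Lim_transform_eventually[OF l1] finS[OF pS] by simp
      hence "liminf (\<lambda>k. phi \<Phi> (X k)) = phi \<Phi> p"
        by (intro lim_imp_Liminf) auto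
      thus ?thesis by simp
    qed
  qed
  have lim: "((\<lambda>x. phi \<Phi> (x, y)) \<longlongrightarrow> \<Phi> y) (at_right 0)" for y
  proof (rule order_tendstoI)
    fix c assume c: "c < \<Phi> y"
    obtain \<delta> where \<delta>: "\<delta> > 0" and H: "\<And>x y'. 0 \<le> x \<and> x < \<delta> \<and> dist y' y < \<delta> \<Longrightarrow> c < phi \<Phi> (x, y')"
      using K[OF lsc ninf b lb z1 c] by blast
    show "eventually (\<lambda>x. c < phi \<Phi> (x, y)) (at_right 0)"
      unfolding eventually_at_right_field using \<delta> H by (intro exI[of _ \<delta>]) auto
  next
    fix c assume c: "\<Phi> y < c"
    show "eventually (\<lambda>x. phi \<Phi> (x, y) < c) (at_right 0)"
      unfolding eventually_at_right_field
      using phi_le[OF b lb z1, of _ y] c by (intro exI[of _ 1]) (auto intro: le_less_trans)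
  qed
  show ?thesis
  proof (intro exI[of _ "phi \<Phi>"] conjI allI impI)
    show "ereal_lsc_on ({0::real..} \<times> UNIV) (phi \<Phi>)" using lscphi unfolding T_def .
    show "ereal_convex_on ({0::real..} \<times> UNIV) (phi \<Phi>)" using conv unfolding T_def .
    fix y show "phi \<Phi> (0, y) = \<Phi> y" using phi_0[of \<Phi> y] ninf by simp
  next
    fix x y :: "real" and y' :: "real ^ 'n" assume "x > 0"
    hence e: "phi \<Phi> (x, y') = ereal (real_of_ereal (phi \<Phi> (x, y')))" by (rule fin)
    show "phi \<Phi> (x, y') \<noteq> \<infinity>" by (subst e) simp
    show "phi \<Phi> (x, y') \<noteq> -\<infinity>" by (subst e) simp
  next
    fix y :: "real ^ 'n" and x1 x2 :: real assume "0 < x1 \<and> x1 < x2"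
    thus "phi \<Phi> (x2, y) < phi \<Phi> (x1, y)" using phi_strict[OF b lb z1] by blast
  next
    fix y show "((\<lambda>x. phi \<Phi> (x, y)) \<longlongrightarrow> \<Phi> y) (at_right 0)" by (rule lim)
  qed
qed

end
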